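(* Let $\Sigma=(\mathcal{U},\mathcal{S})$ be a set system with $m=|\mathcal{U}|$, and let $\mathcal{C}^{*}$ be a minimum-size set cover of $\Sigma$. If a set-cover solution $\mathcal{C}\subseteq\mathcal{S}$ of $\Sigma$ (together with an assignment $\phi$) is stable, then $|\mathcal{C}| \leq O(\log m)\cdot|\mathcal{C}^{*}|$.
   Context: A set system $\Sigma=(\mathcal{U},\mathcal{S})$ consists of a finite universe $\mathcal{U}$ and a finite collection $\mathcal{S}$ of subsets of $\mathcal{U}$; a set-cover solution is a subcollection $\mathcal{C}\subseteq\mathcal{S}$ with $\bigcup_{S\in\mathcal{C}}S=\mathcal{U}$. For a set-cover solution $\mathcal{C}$, an assignment is a map $\phi:\mathcal{U}\to\mathcal{C}$ with $u\in\phi(u)$ for every $u$. For $S\in\mathcal{C}$, its cover set is $\mathtt{cov}(S)=\{u\in\mathcal{U}:\phi(u)=S\}$ (so cover sets of distinct sets are disjoint). The sets of $\mathcal{C}$ are organized into levels $\mathcal{L}_j$, $j\in\mathbb{N}=\{0,1,2,\dots\}$, each set of $\mathcal{C}$ lying in exactly one level, and $A_j=\{u\in\mathcal{U}:\phi(u)\in\mathcal{L}_j\}$. The solution $\mathcal{C}$ is stable if (1) for each $j$ and each $S\in\mathcal{L}_j$, $2^{j}\leq|\mathtt{cov}(S)|<2^{j+1}$; and (2) for each level $\mathcal{L}_j$, there is no $S\in\mathcal{S}$ with $|S\cap A_j|\geq 2^{j+1}$. *)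

theory Defs
  imports Complex_Main
begin

definition set_system :: "'a set \<Rightarrow> 'a set set \<Rightarrow> bool" where
  "set_system U SS \<longleftrightarrow> finite U \<and> finite SS \<and> (\<forall>S\<in>SS. S \<subseteq> U)"

definition is_set_cover :: "'a set \<Rightarrow> 'a set set \<Rightarrow> 'a set set \<Rightarrow> bool" where
  "is_set_cover U SS C \<longleftrightarrow> C \<subseteq> SS \<and> \<Union>C = U"

definition is_min_set_cover :: "'a set \<Rightarrow> 'a set set \<Rightarrow> 'a set set \<Rightarrow> bool" where
  "is_min_set_cover U SS C \<longleftrightarrow> is_set_cover U SS C \<and>
     (\<forall>C'. is_set_cover U SS C' \<longrightarrow> card C \<le> card C')"

definition is_assignment :: "'a set \<Rightarrow> 'a set set \<Rightarrow> ('a \<Rightarrow> 'a set) \<Rightarrow> bool" where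
  "is_assignment U C phi \<longleftrightarrow> (\<forall>u\<in>U. phi u \<in> C \<and> u \<in> phi u)"

definition cov :: "'a set \<Rightarrow> ('a \<Rightarrow> 'a set) \<Rightarrow> 'a set \<Rightarrow> 'a set" where
  "cov U phi S = {u\<in>U. phi u = S}"

definition level_elems :: "'a set \<Rightarrow> 'a set set \<Rightarrow> ('a \<Rightarrow> 'a set) \<Rightarrow> ('a set \<Rightarrow> nat) \<Rightarrow> nat \<Rightarrow> 'a set" where
  "level_elems U C phi lev j = {u\<in>U. phi u \<in> C \<and> lev (phi u) = j}"

definition stable :: "'a set \<Rightarrow> 'a set set \<Rightarrow> 'a set set \<Rightarrow> ('a \<Rightarrow> 'a set) \<Rightarrow> ('a set \<Rightarrow> nat) \<Rightarrow> bool" where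
  "stable U SS C phi lev \<longleftrightarrow>
     (\<forall>S\<in>C. 2 ^ lev S \<le> card (cov U phi S) \<and> card (cov U phi S) < 2 ^ (lev S + 1)) \<and>
     (\<forall>j. \<forall>S\<in>SS. card (S \<inter> level_elems U C phi lev j) < 2 ^ (j + 1))"

end

theory Submission
  imports Defs
begin

lemma ln2_half: "ln (2::real) \<ge> 1/2"
proof -
  have "ln (1/2::real) \<le> 1/2 - 1" by (rule ln_le_minus_one) simp
  moreover have "ln (1/2::real) = - ln 2" by (simp add: ln_div)
  ultimately show ?thesis by simp
qed

lemma level_bound:
  fixes j m :: nat
  assumes "2 ^ j \<le> m"
  shows "real j \<le> 2 * ln (real m)"
proof -
  have m: "real m > 0" using assms by (metis of_nat_0_less_iff order_less_le_trans pos2 zero_less_power)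
  have "ln (2 ^ j :: real) \<le> ln (real m)"
  proof (subst ln_le_cancel_iff)
    show "(2::real) ^ j \<le> real m" using assms by (metis of_nat_le_iff of_nat_numeral of_nat_power)
  qed (use m in auto)
  then have "real j * ln 2 \<le> ln (real m)" by (simp add: ln_realpow)
  moreover have "real j * (1/2) \<le> real j * ln 2" using ln2_half by (intro mult_left_mono) auto
  ultimately show ?thesis by simp
qed

theorem theorem1:
  shows "\<exists>c::real. c > 0 \<and>
    (\<forall>(U::'a set) SS C phi lev Cstar.
       set_system U SS \<longrightarrow> is_min_set_cover U SS Cstar \<longrightarrow>
       is_set_cover U SS C \<longrightarrow> is_assignment U C phi \<longrightarrow> stable U SS C phi lev \<longrightarrow>
       real (card C) \<le> c * (1 + ln (real (card U))) * real (card Cstar))"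
proof (rule exI[of _ 4], intro conjI allI impI)
  fix U :: "'a set" and SS C phi lev Cstar
  assume sys: "set_system U SS" and mc: "is_min_set_cover U SS Cstar"
    and sc: "is_set_cover U SS C" and asg: "is_assignment U C phi" and st: "stable U SS C phi lev"
  define m where "m = card U"
  have fU: "finite U" and fSS: "finite SS" using sys by (auto simp: set_system_def)
  have CSS: "C \<subseteq> SS" using sc by (auto simp: is_set_cover_def)
  have fC: "finite C" using CSS fSS finite_subset by blast
  have CsS: "Cstar \<subseteq> SS" and UCs: "\<Union>Cstar = U" using mc by (auto simp: is_min_set_cover_def is_set_cover_def)
  have fCs: "finite Cstar" using CsS fSS finite_subset by blast
  have st1: "\<And>S. S \<in> C \<Longrightarrow> 2 ^ lev S \<le> card (cov U phi S)" using st by (auto simp: stable_def)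
  have st2: "\<And>j S. S \<in> SS \<Longrightarrow> card (S \<inter> level_elems U C phi lev j) < 2 ^ (j + 1)"
    using st by (auto simp: stable_def)
  define Cj where "Cj j = {S\<in>C. lev S = j}" for j
  define L where "L = lev ` C"
  have fL: "finite L" using fC L_def by simp
  have covU: "cov U phi S \<subseteq> U" for S by (auto simp: cov_def)
  have per: "card (Cj j) \<le> 2 * card Cstar" for j
  proof -
    define A where "A = level_elems U C phi lev j"
    have fCj: "finite (Cj j)" using fC by (auto simp: Cj_def)
    have "card (Cj j) * 2 ^ j = (\<Sum>S\<in>Cj j. (2::nat) ^ j)" by simp
    also have "\<dots> \<le> (\<Sum>S\<in>Cj j. card (cov U phi S))"
      by (intro sum_mono) (auto simp: Cj_def st1)
    also have "\<dots> = card (\<Union>S\<in>Cj j. cov U phi S)"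
      using fCj fU covU by (subst card_UN_disjoint) (auto simp: cov_def intro: finite_subset)
    also have "\<dots> \<le> card A"
      using fU asg by (intro card_mono) (auto simp: A_def level_elems_def cov_def Cj_def is_assignment_def)
    also have "card A \<le> card (\<Union>T\<in>Cstar. T \<inter> A)"
      using fCs fU UCs by (intro card_mono) (auto simp: A_def level_elems_def)
    also have "\<dots> \<le> (\<Sum>T\<in>Cstar. card (T \<inter> A))" using fCs by (rule card_UN_le)
    also have "\<dots> \<le> (\<Sum>T\<in>Cstar. 2 ^ (j+1))"
      using CsS st2 by (intro sum_mono) (auto simp: A_def less_imp_le)
    also have "\<dots> = (2 * card Cstar) * 2 ^ j" by simp
    finally show ?thesis by simp
  qed
  have Lbound: "real j \<le> 2 * ln (real m)" if jL: "j \<in> L" for j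
  proof -
    obtain S where S: "S \<in> C" "lev S = j" using jL unfolding L_def by auto
    have "2 ^ j \<le> card (cov U phi S)" using st1 S by auto
    also have "\<dots> \<le> m" unfolding m_def using fU covU by (intro card_mono) auto
    finally show ?thesis by (rule level_bound)
  qed
  have LK: "L \<subseteq> {0..nat \<lfloor>2 * ln (real m)\<rfloor>}"
  proof
    fix j assume "j \<in> L"
    then have "real j \<le> 2 * ln (real m)" by (rule Lbound)
    then have "int j \<le> \<lfloor>2 * ln (real m)\<rfloor>" by (simp add: le_floor_iff)
    then show "j \<in> {0..nat \<lfloor>2 * ln (real m)\<rfloor>}" by simp
  qed
  have cardL: "real (card L) \<le> 1 + 2 * ln (real m)"
  proof (cases "L = {}")
    case True
    have "ln (real m) \<ge> 0" by (cases "m = 0") auto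
    then show ?thesis using True by simp
  next
    case False
    then obtain j where "j \<in> L" by auto
    then have lpos: "0 \<le> 2 * ln (real m)" using Lbound[of j] by simp
    have "card L \<le> card {0..nat \<lfloor>2 * ln (real m)\<rfloor>}" using LK by (intro card_mono) auto
    then have "card L \<le> nat \<lfloor>2 * ln (real m)\<rfloor> + 1" by simp
    then have "real (card L) \<le> real (nat \<lfloor>2 * ln (real m)\<rfloor>) + 1" by linarith
    also have "real (nat \<lfloor>2 * ln (real m)\<rfloor>) = of_int \<lfloor>2 * ln (real m)\<rfloor>" using lpos by simp
    also have "\<dots> \<le> 2 * ln (real m)" by simp
    finally show ?thesis by simp
  qed
  have "C = (\<Union>j\<in>L. Cj j)" by (auto simp: Cj_def L_def)
  then have "card C \<le> (\<Sum>j\<in>L. card (Cj j))" using card_UN_le[OF fL, of Cj] by simp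
  also have "\<dots> \<le> (\<Sum>j\<in>L. 2 * card Cstar)" by (intro sum_mono per)
  also have "\<dots> = card L * (2 * card Cstar)" by simp
  finally have "real (card C) \<le> real (card L) * (2 * real (card Cstar))" by (metis of_nat_le_iff of_nat_mult of_nat_numeral)
  also have "\<dots> \<le> (1 + 2 * ln (real m)) * (2 * real (card Cstar))"
    by (intro mult_right_mono cardL) auto
  also have "\<dots> \<le> 4 * (1 + ln (real m)) * real (card Cstar)"
  proof -
    have "ln (real m) \<ge> 0" by (cases "m = 0") auto
    then have "(1 + 2 * ln (real m)) * 2 \<le> 4 * (1 + ln (real m))" by simp
    then show ?thesis by (metis mult.assoc mult_right_mono of_nat_0_le_iff)
  qed
  finally show "real (card C) \<le> 4 * (1 + ln (real (card U))) * real (card Cstar)" by (simp add: m_def)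
qed simp

end
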